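(* Consider the model and approximate SIR $\widetilde{\mathsf{SIR}}''_L$ in the context with $\alpha=4$, $p=1$ and $L\ge2$. If $\beta<\frac{\gamma}{L-1}$, then $$\mathbb{P}\left(\widetilde{\mathsf{SIR}}''_L\ge\frac{\beta}{\gamma}\right)=\left(1-\frac{1}{\sqrt{\gamma/\beta+\frac{(L-2)^2}{4}}-\frac{L-2}{2}}\right)^{L-1},$$ and if $\beta\ge\frac{\gamma}{L-1}$ this probability is $0$.
   Context: Let $\Phi$ be a homogeneous Poisson point process on $\mathbb{R}^2$ of intensity $\lambda>0$ (base stations), user at the origin $o$; label points in increasing distance as $x_1,x_2,\dots$, $R_k=\|x_k\|$. Fix an integer $L\ge2$, $\alpha>2$, $\gamma>0$, $\beta>0$, $p\in[0,1]$. Independently of $\Phi$ let $a_1,\dots,a_{L-1}$ be i.i.d. Bernoulli($p$), $\Omega=\sum_{i=1}^{L-1}a_i$; when $\Omega\ge1$, $\hat R_1$ is the smallest distance from $o$ among the $x_i$ with $i\le L-1$, $a_i=1$. Approximate SIR limited by participating-BS interference only (fully loaded network, interference from BSs beyond $x_L$ and noise ignored): if $\Omega\ge1$, $$\widetilde{\mathsf{SIR}}''_L=\frac{R_L^{-\alpha}}{\hat R_1^{-\alpha}+\frac{2(\Omega-1)}{2-\alpha}\cdot\frac{R_L^{2-\alpha}-\hat R_1^{2-\alpha}}{R_L^2-\hat R_1^2}},$$ and if $\Omega=0$, $\widetilde{\mathsf{SIR}}''_L=+\infty$. *)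

theory Defs
  imports "HOL-Probability.Probability"
begin

definition hppp :: "'a measure \<Rightarrow> real \<Rightarrow> ('a \<Rightarrow> (real^2) set) \<Rightarrow> bool" where
  "hppp M lam Phi \<longleftrightarrow>
     prob_space M \<and>
     (\<forall>\<omega>\<in>space M. \<forall>B. bounded B \<longrightarrow> finite (Phi \<omega> \<inter> B)) \<and>
     (\<forall>B\<in>sets lborel. bounded B \<longrightarrow>
        (\<lambda>\<omega>. card (Phi \<omega> \<inter> B)) \<in> measurable M (count_space UNIV) \<and>
        (\<forall>k::nat. measure M {\<omega>\<in>space M. card (Phi \<omega> \<inter> B) = k}
            = exp (- lam * measure lborel B) * (lam * measure lborel B) ^ k / fact k)) \<and>
     (\<forall>(I::nat set) Bs. finite I \<longrightarrow> (\<forall>i\<in>I. Bs i \<in> sets lborel \<and> bounded (Bs i)) \<longrightarrow>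
        disjoint_family_on Bs I \<longrightarrow>
        prob_space.indep_vars M (\<lambda>_. count_space UNIV) (\<lambda>i \<omega>. card (Phi \<omega> \<inter> Bs i)) I)"

definition Rk :: "(real^2) set \<Rightarrow> nat \<Rightarrow> real" where
  "Rk P k = Inf {r. 0 \<le> r \<and> k \<le> card {x\<in>P. norm x \<le> r}}"

text \<open>Approximate SIR'' for path-loss exponent alpha, cooperation size L, point set P and
participation indicators a (indices 1..L-1); +\<infinity> if no BS participates.\<close>
definition approx_SIR :: "real \<Rightarrow> nat \<Rightarrow> (real^2) set \<Rightarrow> (nat \<Rightarrow> bool) \<Rightarrow> ereal" where
  "approx_SIR alpha L P a =
     (let Om = card {i\<in>{1..L-1}. a i} in
      if Om = 0 then \<infinity> else
      (let R1h = Min (Rk P ` {i\<in>{1..L-1}. a i}); RL = Rk P L in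
        ereal (RL powr (- alpha) /
          (R1h powr (- alpha) + 2 * (real Om - 1) / (2 - alpha)
             * (RL powr (2 - alpha) - R1h powr (2 - alpha)) / (RL\<^sup>2 - R1h\<^sup>2)))))"

end

theory Submission
  imports Defs
begin

definition Qf :: "nat \<Rightarrow> real \<Rightarrow> real" where
  "Qf n x = (\<Sum>k<n. exp (-x) * x ^ k / fact k)"
definition qf :: "nat \<Rightarrow> real \<Rightarrow> real" where
  "qf n x = exp (-x) * x ^ (n - 1) / fact (n - 1)"

lemma Qf_deriv:
  assumes "n \<ge> 1" shows "(Qf n has_real_derivative - qf n x) (at x)"
  using assms
proof (induction n rule: dec_induct)
  case base
  have "Qf 1 = (\<lambda>x. exp (-x))" by (auto simp: Qf_def)
  then show ?case unfolding qf_def by (auto intro!: derivative_eq_intros)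
next
  case (step n)
  have eq: "Qf (Suc n) = (\<lambda>x. Qf n x + exp (-x) * x ^ n / fact n)"
    by (auto simp: Qf_def)
  have d: "((\<lambda>x. Qf n x + exp (-x) * x ^ n / fact n) has_real_derivative
     (- qf n x + ((- exp (-x)) * x ^ n + exp (-x) * (real n * x ^ (n - 1))) / fact n)) (at x)"
    by (rule derivative_eq_intros step.IH)+ (auto intro!: derivative_eq_intros)
  have f: "fact n = real n * fact (n - 1)"
    using step(1) by (metis Suc_diff_1 fact_Suc le_eq_less_or_eq less_le_trans of_nat_fact of_nat_mult zero_less_one)
  have "- qf n x + ((- exp (-x)) * x ^ n + exp (-x) * (real n * x ^ (n - 1))) / fact n
        = - qf (Suc n) x"
    using step(1) unfolding qf_def by (simp add: field_simps f)
  with d show ?case unfolding eq by simp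
qed

lemma qf_cont: "isCont (qf n) z"
  unfolding qf_def by (auto intro!: continuous_intros)

lemma Qf_0: "n \<ge> 1 \<Longrightarrow> Qf n 0 = 1"
  unfolding Qf_def by (induction n rule: dec_induct) auto

lemma Qf_lim: "(Qf n \<longlongrightarrow> 0) at_top"
proof -
  have "((\<lambda>x::real. \<Sum>k<n. x ^ k / exp x / fact k) \<longlongrightarrow> (\<Sum>k<n. 0)) at_top"
  proof (rule tendsto_sum)
    fix k show "((\<lambda>x::real. x ^ k / exp x / fact k) \<longlongrightarrow> 0) at_top"
      by (rule tendsto_divide_zero, rule tendsto_power_div_exp_0)
  qed
  moreover have "Qf n = (\<lambda>x. \<Sum>k<n. x ^ k / exp x / fact k)"
    by (auto simp: Qf_def exp_minus field_simps intro!: ext sum.cong)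
  ultimately show ?thesis by simp
qed

lemma mvt_quot:
  fixes a b :: "'b \<Rightarrow> real"
  assumes D: "\<And>x. (Q has_real_derivative - q x) (at x)" and C: "isCont q z"
    and a: "(a \<longlongrightarrow> z) F" and b: "(b \<longlongrightarrow> z) F" and ab: "eventually (\<lambda>y. a y < b y) F"
  shows "((\<lambda>y. (Q (a y) - Q (b y)) / (b y - a y)) \<longlongrightarrow> q z) F"
proof (rule tendstoI)
  fix e :: real assume e: "e > 0"
  from C e obtain d where d: "d > 0" "\<And>x. dist x z < d \<Longrightarrow> dist (q x) (q z) < e"
    unfolding continuous_at_eps_delta by blast
  have "eventually (\<lambda>y. dist (a y) z < d) F" using a d(1) by (rule tendstoD)
  moreover have "eventually (\<lambda>y. dist (b y) z < d) F" using b d(1) by (rule tendstoD)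
  ultimately show "eventually (\<lambda>y. dist ((Q (a y) - Q (b y)) / (b y - a y)) (q z) < e) F"
    using ab
  proof eventually_elim
    case (elim y)
    obtain xi where xi: "a y < xi" "xi < b y" "Q (b y) - Q (a y) = (b y - a y) * (- q xi)"
      using MVT2[of "a y" "b y" Q "\<lambda>x. - q x"] elim(3) D by blast
    have "(Q (a y) - Q (b y)) / (b y - a y) = q xi" using xi by (simp add: field_simps)
    moreover have "dist xi z < d" using elim xi by (auto simp: dist_real_def)
    ultimately show ?case using d(2) by simp
  qed
qed

definition lfin :: "(real^2) set \<Rightarrow> bool" where
  "lfin P \<longleftrightarrow> (\<forall>B. bounded B \<longrightarrow> finite (P \<inter> B))"
definition cnt :: "(real^2) set \<Rightarrow> real \<Rightarrow> nat" where
  "cnt P r = card (P \<inter> cball 0 r)"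

lemma cnt_mono: "lfin P \<Longrightarrow> r \<le> r' \<Longrightarrow> cnt P r \<le> cnt P r'"
  unfolding cnt_def lfin_def
  by (intro card_mono) (auto simp: subset_iff)

lemma right_cont:
  assumes lf: "lfin P" shows "\<exists>d>0. P \<inter> cball 0 (R + d) = P \<inter> cball 0 R"
proof -
  define F where "F = {x\<in>P \<inter> cball 0 (R+1). norm x > R}"
  have fF: "finite F" using lf unfolding lfin_def F_def
    by (metis (no_types, lifting) bounded_cball finite_subset inf_le1 mem_Collect_eq subsetI Int_assoc Int_iff)
  show ?thesis
  proof (cases "F = {}")
    case True
    show ?thesis
      by (rule exI[of _ 1]) (use True in \<open>auto simp: F_def\<close>)
  next
    case False
    define m where "m = Min (norm ` F)"
    have mF: "\<And>x. x \<in> F \<Longrightarrow> m \<le> norm x" using fF by (auto simp: m_def)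
    have "m \<in> norm ` F" using fF False by (auto simp: m_def)
    then have mR: "m > R" by (auto simp: F_def)
    define d where "d = min 1 ((m - R) / 2)"
    have d: "d > 0" "d \<le> 1" "R + d < m" using mR unfolding d_def by (auto simp: min_def field_simps)
    show ?thesis
    proof (rule exI[of _ d], intro conjI d(1) equalityI subsetI)
      fix x assume x: "x \<in> P \<inter> cball 0 (R + d)"
      show "x \<in> P \<inter> cball 0 R"
      proof (rule ccontr)
        assume "x \<notin> P \<inter> cball 0 R"
        then have "x \<in> F" using x d by (auto simp: F_def)
        then show False using mF[of x] x d by auto
      qed
    qed (use d in auto)
  qed
qed

lemma Rk_le_iff:
  assumes lf: "lfin P" and ne: "\<exists>r\<ge>0. k \<le> cnt P r" and r: "r \<ge> 0"
  shows "Rk P k \<le> r \<longleftrightarrow> k \<le> cnt P r"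
proof -
  define S where "S = {r. 0 \<le> r \<and> k \<le> card {x\<in>P. norm x \<le> r}}"
  have eqs: "\<And>r. {x\<in>P. norm x \<le> r} = P \<inter> cball 0 r" by auto
  have S: "S = {r. 0 \<le> r \<and> k \<le> cnt P r}" unfolding S_def cnt_def eqs ..
  have Rk: "Rk P k = Inf S" unfolding Rk_def S_def ..
  have Sne: "S \<noteq> {}" using ne S by auto
  have bdd: "bdd_below S" unfolding S by (auto intro: bdd_belowI[of _ 0])
  have up: "\<And>a b. a \<in> S \<Longrightarrow> a \<le> b \<Longrightarrow> b \<in> S"
    unfolding S using cnt_mono[OF lf] by (auto intro: le_trans)
  have R0: "Inf S \<ge> 0" using Sne by (intro cInf_greatest) (auto simp: S)
  have inS: "Inf S \<in> S"
  proof -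
    obtain d where d: "d > 0" "P \<inter> cball 0 (Inf S + d) = P \<inter> cball 0 (Inf S)"
      using right_cont[OF lf] by blast
    obtain y where y: "y \<in> S" "y < Inf S + d"
      using cInf_less_iff[OF Sne bdd, of "Inf S + d"] d by auto
    have "Inf S + d \<in> S" using up[OF y(1)] y by auto
    then show ?thesis using d R0 by (auto simp: S cnt_def)
  qed
  show ?thesis
  proof
    assume "Rk P k \<le> r"
    then have "r \<in> S" using up[OF inS] Rk by auto
    then show "k \<le> cnt P r" by (auto simp: S)
  next
    assume "k \<le> cnt P r"
    then have "r \<in> S" using r by (auto simp: S)
    then show "Rk P k \<le> r" unfolding Rk by (rule cInf_lower[OF _ bdd])
  qed
qed

lemma Rk_nonneg:
  assumes lf: "lfin P" and ne: "\<exists>r\<ge>0. k \<le> cnt P r"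
  shows "Rk P k \<ge> 0"
  unfolding Rk_def using ne
  by (intro cInf_greatest) (auto simp: cnt_def Int_def mem_cball_0 conj_commute)

lemma Rk_self:
  assumes lf: "lfin P" and ne: "\<exists>r\<ge>0. k \<le> cnt P r"
  shows "k \<le> cnt P (Rk P k)"
  using Rk_le_iff[OF lf ne Rk_nonneg[OF lf ne]] by simp

lemma Rk_mono:
  assumes lf: "lfin P" and ne: "\<exists>r\<ge>0. k' \<le> cnt P r" and kk: "k \<le> k'"
  shows "Rk P k \<le> Rk P k'"
proof -
  have ne': "\<exists>r\<ge>0. k \<le> cnt P r" using ne kk by auto
  show ?thesis using Rk_le_iff[OF lf ne' Rk_nonneg[OF lf ne]] Rk_self[OF lf ne] kk by simp
qed

lemma Rk_empty:
  assumes "\<not> (\<exists>r\<ge>0. k \<le> cnt P r)" shows "Rk P k = Inf {}"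
proof -
  have "{r. 0 \<le> r \<and> k \<le> card {x\<in>P. norm x \<le> r}} = {}"
    using assms unfolding cnt_def by (auto simp: Int_def mem_cball_0 conj_commute)
  then show ?thesis unfolding Rk_def by (simp only:)
qed

locale pppm = prob_space M for M :: "'a measure" +
  fixes lam :: real and Phi :: "'a \<Rightarrow> (real^2) set"
  assumes hp: "hppp M lam Phi" and lam: "lam > 0"
begin

definition rad :: "real \<Rightarrow> real" where "rad u = sqrt (u / (lam * pi))"

lemma rad_sq: "u \<ge> 0 \<Longrightarrow> lam * pi * (rad u)\<^sup>2 = u"
  using lam by (simp add: rad_def)
lemma rad_nonneg: "u \<ge> 0 \<Longrightarrow> rad u \<ge> 0"
  using lam by (simp add: rad_def)
lemma rad_mono: "u \<le> v \<Longrightarrow> rad u \<le> rad v"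
  using lam by (simp add: rad_def divide_right_mono)
lemma rad_sq': "u \<ge> 0 \<Longrightarrow> (rad u)\<^sup>2 = u / (lam * pi)"
  using lam by (simp add: rad_def)

lemma lf: "\<omega> \<in> space M \<Longrightarrow> lfin (Phi \<omega>)"
  using hp unfolding hppp_def lfin_def by blast

lemma card_meas:
  assumes "B \<in> sets lborel" "bounded B"
  shows "(\<lambda>\<omega>. card (Phi \<omega> \<inter> B)) \<in> measurable M (count_space UNIV)"
  using hp assms unfolding hppp_def by blast

lemma card_prob:
  assumes "B \<in> sets lborel" "bounded B"
  shows "prob {\<omega>\<in>space M. card (Phi \<omega> \<inter> B) = k}
     = exp (- lam * measure lborel B) * (lam * measure lborel B) ^ k / fact k"
  using hp assms unfolding hppp_def by blast

lemma card_sets: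
  assumes "B \<in> sets lborel" "bounded B"
  shows "{\<omega>\<in>space M. Pr (card (Phi \<omega> \<inter> B))} \<in> events"
proof -
  have "{\<omega>\<in>space M. Pr (card (Phi \<omega> \<inter> B))} = (\<lambda>\<omega>. card (Phi \<omega> \<inter> B)) -` {n. Pr n} \<inter> space M"
    by auto
  also have "\<dots> \<in> events" by (rule measurable_sets[OF card_meas[OF assms]]) auto
  finally show ?thesis .
qed

lemma cball_sets: "cball (0::real^2) r \<in> sets lborel"
  by (simp add: borel_closed)

lemma cnt_sets: "{\<omega>\<in>space M. Pr (cnt (Phi \<omega>) r)} \<in> events"
  unfolding cnt_def by (rule card_sets[OF cball_sets]) auto

lemma cnt_meas: "(\<lambda>\<omega>. cnt (Phi \<omega>) r) \<in> measurable M (count_space UNIV)"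
  unfolding cnt_def by (rule card_meas[OF cball_sets]) auto

lemma area_cball: "r \<ge> 0 \<Longrightarrow> measure lborel (cball (0::real^2) r) = pi * r\<^sup>2"
  by (simp add: content_cball DIM_cart unit_ball_vol_2)

lemma prob_less:
  assumes "B \<in> sets lborel" "bounded B"
  shows "prob {\<omega>\<in>space M. card (Phi \<omega> \<inter> B) < n} = Qf n (lam * measure lborel B)"
proof (induction n)
  case 0 then show ?case by (simp add: Qf_def)
next
  case (Suc n)
  have "{\<omega>\<in>space M. card (Phi \<omega> \<inter> B) < Suc n} = {\<omega>\<in>space M. card (Phi \<omega> \<inter> B) < n} \<union> {\<omega>\<in>space M. card (Phi \<omega> \<inter> B) = n}"
    by auto
  then have "prob {\<omega>\<in>space M. card (Phi \<omega> \<inter> B) < Suc n} = prob {\<omega>\<in>space M. card (Phi \<omega> \<inter> B) < n} + prob {\<omega>\<in>space M. card (Phi \<omega> \<inter> B) = n}"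
    by (auto intro!: finite_measure_Union card_sets assms)
  then show ?case using Suc card_prob[OF assms, of n]
    by (simp add: Qf_def mult_ac)
qed

lemma probG:
  assumes a: "0 \<le> a" and ax: "a \<le> x"
  shows "prob {\<omega>\<in>space M. cnt (Phi \<omega>) (rad a) = 0 \<and> cnt (Phi \<omega>) (rad x) < n} = exp (-a) * Qf n (x - a)"
proof -
  define Bs where "Bs = (\<lambda>i::nat. if i = 0 then cball (0::real^2) (rad a) else cball 0 (rad x) - cball 0 (rad a))"
  have Bs: "\<And>i. Bs i \<in> sets lborel \<and> bounded (Bs i)"
    unfolding Bs_def by (auto intro!: cball_sets sets.Diff bounded_subset[OF bounded_cball])
  have disj: "disjoint_family_on Bs {0, 1}" unfolding disjoint_family_on_def Bs_def by auto
  have ind: "indep_vars (\<lambda>_. count_space UNIV) (\<lambda>i \<omega>. card (Phi \<omega> \<inter> Bs i)) {0,1}"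
    using hp disj Bs unfolding hppp_def by auto
  define A where "A = (\<lambda>i::nat. if i = 0 then {0::nat} else {..<n})"
  have "prob (\<Inter>i\<in>{0,1}. (\<lambda>\<omega>. card (Phi \<omega> \<inter> Bs i)) -` A i \<inter> space M)
      = (\<Prod>i\<in>{0,1}. prob ((\<lambda>\<omega>. card (Phi \<omega> \<inter> Bs i)) -` A i \<inter> space M))"
    by (rule indep_varsD_finite[OF ind]) auto
  also have "\<dots> = prob {\<omega>\<in>space M. card (Phi \<omega> \<inter> Bs 0) = 0} * prob {\<omega>\<in>space M. card (Phi \<omega> \<inter> Bs 1) < n}"
    by (simp add: A_def) (intro arg_cong2[where f="(*)"] arg_cong[where f=prob]; auto)
  also have "\<dots> = exp (-a) * Qf n (x - a)"
  proof -
    have m0: "lam * measure lborel (Bs 0) = a"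
      using rad_sq[OF a] rad_nonneg[OF a] by (simp add: Bs_def area_cball mult_ac)
    have "measure lborel (Bs 1) = measure lborel (cball (0::real^2) (rad x)) - measure lborel (cball (0::real^2) (rad a))"
      unfolding Bs_def using rad_mono[OF ax]
      using emeasure_bounded_finite[of "cball (0::real^2) (rad x)"]
      by (simp, intro measure_Diff) (auto intro!: cball_sets)
    also have "\<dots> = pi * (rad x)\<^sup>2 - pi * (rad a)\<^sup>2"
      using rad_nonneg[OF a] rad_nonneg[of x] a ax by (simp add: area_cball)
    finally have m1: "lam * measure lborel (Bs 1) = x - a"
      using rad_sq[OF a] rad_sq[of x] a ax
      by (simp add: right_diff_distrib mult_ac)
    show ?thesis
      using card_prob[OF _ _, of "Bs 0" 0] prob_less[of "Bs 1" n] Bs m0 m1 by simp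
  qed
  also have "(\<Inter>i\<in>{0,1}. (\<lambda>\<omega>. card (Phi \<omega> \<inter> Bs i)) -` A i \<inter> space M)
      = {\<omega>\<in>space M. cnt (Phi \<omega>) (rad a) = 0 \<and> cnt (Phi \<omega>) (rad x) < n}"
  proof (intro equalityI subsetI)
    fix \<omega> assume w: "\<omega> \<in> (\<Inter>i\<in>{0,1}. (\<lambda>\<omega>. card (Phi \<omega> \<inter> Bs i)) -` A i \<inter> space M)"
    then have sp: "\<omega> \<in> space M" by auto
    have fin: "\<And>r. finite (Phi \<omega> \<inter> cball 0 r)" using lf[OF sp] unfolding lfin_def by auto
    from w have c0: "card (Phi \<omega> \<inter> cball 0 (rad a)) = 0" by (auto simp: A_def Bs_def)
    then have e: "Phi \<omega> \<inter> cball 0 (rad a) = {}" using fin by simp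
    from w have "card (Phi \<omega> \<inter> (cball 0 (rad x) - cball 0 (rad a))) < n" by (auto simp: A_def Bs_def)
    moreover have "Phi \<omega> \<inter> (cball 0 (rad x) - cball 0 (rad a)) = Phi \<omega> \<inter> cball 0 (rad x)" using e by auto
    ultimately show "\<omega> \<in> {\<omega>\<in>space M. cnt (Phi \<omega>) (rad a) = 0 \<and> cnt (Phi \<omega>) (rad x) < n}"
      using c0 sp by (simp add: cnt_def)
  next
    fix \<omega> assume w: "\<omega> \<in> {\<omega>\<in>space M. cnt (Phi \<omega>) (rad a) = 0 \<and> cnt (Phi \<omega>) (rad x) < n}"
    then have sp: "\<omega> \<in> space M" by auto
    have fin: "\<And>r. finite (Phi \<omega> \<inter> cball 0 r)" using lf[OF sp] unfolding lfin_def by auto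
    from w have c0: "card (Phi \<omega> \<inter> cball 0 (rad a)) = 0" by (auto simp: cnt_def)
    then have e: "Phi \<omega> \<inter> cball 0 (rad a) = {}" using fin by simp
    have "Phi \<omega> \<inter> (cball 0 (rad x) - cball 0 (rad a)) = Phi \<omega> \<inter> cball 0 (rad x)" using e by auto
    then show "\<omega> \<in> (\<Inter>i\<in>{0,1}. (\<lambda>\<omega>. card (Phi \<omega> \<inter> Bs i)) -` A i \<inter> space M)"
      using w c0 by (auto simp: A_def Bs_def cnt_def)
  qed
  finally show ?thesis .
qed

end

context pppm begin

lemma ne_nat: "\<omega> \<in> space M \<Longrightarrow> (\<exists>r\<ge>0. k \<le> cnt (Phi \<omega>) r) \<longleftrightarrow> (\<exists>n::nat. k \<le> cnt (Phi \<omega>) (real n))"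
proof
  assume "\<omega> \<in> space M" "\<exists>r\<ge>0. k \<le> cnt (Phi \<omega>) r"
  then obtain r where r: "r \<ge> 0" "k \<le> cnt (Phi \<omega>) r" and sp: "\<omega> \<in> space M" by auto
  obtain n::nat where "r \<le> real n" using real_arch_simple by blast
  then show "\<exists>n::nat. k \<le> cnt (Phi \<omega>) (real n)" using cnt_mono[OF lf[OF sp]] r by (meson le_trans)
qed (use of_nat_0_le_iff in blast)

lemma ne_sets: "{\<omega>\<in>space M. \<exists>n::nat. k \<le> cnt (Phi \<omega>) (real n)} \<in> events"
proof -
  have "{\<omega>\<in>space M. \<exists>n::nat. k \<le> cnt (Phi \<omega>) (real n)} = (\<Union>n. {\<omega>\<in>space M. k \<le> cnt (Phi \<omega>) (real n)})"
    by auto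
  also have "\<dots> \<in> events" using cnt_sets by (intro sets.countable_UN) auto
  finally show ?thesis .
qed

lemma Rk_le_char:
  assumes sp: "\<omega> \<in> space M"
  shows "Rk (Phi \<omega>) k \<le> c \<longleftrightarrow>
    ((\<exists>n::nat. k \<le> cnt (Phi \<omega>) (real n)) \<and> (0 \<le> c \<and> k \<le> cnt (Phi \<omega>) c)) \<or>
    (\<not> (\<exists>n::nat. k \<le> cnt (Phi \<omega>) (real n)) \<and> Inf ({}::real set) \<le> c)"
proof (cases "\<exists>n::nat. k \<le> cnt (Phi \<omega>) (real n)")
  case True
  then have ne: "\<exists>r\<ge>0. k \<le> cnt (Phi \<omega>) r" using ne_nat[OF sp] by blast
  have "Rk (Phi \<omega>) k \<le> c \<longleftrightarrow> (0 \<le> c \<and> k \<le> cnt (Phi \<omega>) c)"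
  proof
    assume a: "Rk (Phi \<omega>) k \<le> c"
    have c0: "0 \<le> c" using Rk_nonneg[OF lf[OF sp] ne] a by linarith
    then show "0 \<le> c \<and> k \<le> cnt (Phi \<omega>) c" using Rk_le_iff[OF lf[OF sp] ne c0] a by blast
  next
    assume a: "0 \<le> c \<and> k \<le> cnt (Phi \<omega>) c"
    then show "Rk (Phi \<omega>) k \<le> c" using Rk_le_iff[OF lf[OF sp] ne] by blast
  qed
  then show ?thesis using True by blast
next
  case False
  then have ne: "\<not> (\<exists>r\<ge>0. k \<le> cnt (Phi \<omega>) r)" using ne_nat[OF sp] by blast
  show ?thesis using Rk_empty[OF ne] False by simp
qed

lemma Rk_meas[measurable]: "(\<lambda>\<omega>. Rk (Phi \<omega>) k) \<in> borel_measurable M"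
  unfolding borel_measurable_iff_le
proof
  fix c :: real
  have "{w \<in> space M. Rk (Phi w) k \<le> c} = {\<omega>\<in>space M. ((\<exists>n::nat. k \<le> cnt (Phi \<omega>) (real n)) \<and> (0 \<le> c \<and> k \<le> cnt (Phi \<omega>) c)) \<or>
    (\<not> (\<exists>n::nat. k \<le> cnt (Phi \<omega>) (real n)) \<and> Inf ({}::real set) \<le> c)}"
    using Rk_le_char by blast
  also have "\<dots> \<in> events"
    by (intro sets.sets_Collect_disj sets.sets_Collect_conj sets.sets_Collect_neg ne_sets cnt_sets sets.sets_Collect_const)
  finally show "{w \<in> space M. Rk (Phi w) k \<le> c} \<in> events" .
qed

end

context pppm begin

lemma SIR_sets:
  fixes A :: "nat set" and b :: real
  shows "{\<omega>\<in>space M. ereal b \<le> approx_SIR 4 L (Phi \<omega>) (\<lambda>i. i \<in> A)} \<in> events"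
proof (cases "card {i\<in>{1..L-1}. i \<in> A} = 0")
  case True
  then show ?thesis by (simp add: approx_SIR_def)
next
  case False
  define A' where "A' = {i\<in>{1..L-1}. i \<in> A}"
  define g where "g = (\<lambda>\<omega>. (Rk (Phi \<omega>) L powr (- 4) /
          (Min ((\<lambda>i. Rk (Phi \<omega>) i) ` A') powr (- 4) + 2 * (real (card A') - 1) / (2 - 4)
             * (Rk (Phi \<omega>) L powr (2 - 4) - Min ((\<lambda>i. Rk (Phi \<omega>) i) ` A') powr (2 - 4)) / ((Rk (Phi \<omega>) L)\<^sup>2 - (Min ((\<lambda>i. Rk (Phi \<omega>) i) ` A'))\<^sup>2))))"
  have fA: "finite A'" by (simp add: A'_def)
  have m1: "(\<lambda>\<omega>. Min ((\<lambda>i. Rk (Phi \<omega>) i) ` A')) \<in> borel_measurable M"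
    by (rule borel_measurable_Min[OF fA]) simp
  have gm: "g \<in> borel_measurable M" unfolding g_def using m1 by measurable
  have "{\<omega>\<in>space M. ereal b \<le> approx_SIR 4 L (Phi \<omega>) (\<lambda>i. i \<in> A)} = {\<omega>\<in>space M. b \<le> g \<omega>}"
    using False unfolding approx_SIR_def g_def A'_def Let_def by auto
  also have "\<dots> \<in> events" using gm by measurable
  finally show ?thesis .
qed

end

context pppm begin

definition Es :: "real \<Rightarrow> nat \<Rightarrow> 'a set" where
  "Es s L = {\<omega>\<in>space M. s * (Rk (Phi \<omega>) L)\<^sup>2 \<le> (Rk (Phi \<omega>) 1)\<^sup>2}"
definition Hs :: "real \<Rightarrow> nat \<Rightarrow> real \<Rightarrow> real" where
  "Hs s L u = prob (Es s L \<inter> {\<omega>\<in>space M. L \<le> cnt (Phi \<omega>) (rad u)})"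
definition Gs :: "nat \<Rightarrow> real \<Rightarrow> real \<Rightarrow> 'a set" where
  "Gs L a x = {\<omega>\<in>space M. cnt (Phi \<omega>) (rad a) = 0 \<and> cnt (Phi \<omega>) (rad x) < L}"

lemma Es_sets[measurable]: "Es s L \<in> events"
  unfolding Es_def by measurable

lemma Gs_sets: "Gs L a x \<in> events"
proof -
  have "Gs L a x = {\<omega>\<in>space M. cnt (Phi \<omega>) (rad a) = 0} \<inter> {\<omega>\<in>space M. cnt (Phi \<omega>) (rad x) < L}"
    unfolding Gs_def by auto
  moreover have "{\<omega>\<in>space M. cnt (Phi \<omega>) (rad a) = 0} \<in> events" by (rule cnt_sets)
  moreover have "{\<omega>\<in>space M. cnt (Phi \<omega>) (rad x) < L} \<in> events" by (rule cnt_sets)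
  ultimately show ?thesis by simp
qed

lemma D_sets: "Es s L \<inter> {\<omega>\<in>space M. cnt (Phi \<omega>) (rad v) < L \<and> L \<le> cnt (Phi \<omega>) (rad w)} \<in> events"
proof -
  have "{\<omega>\<in>space M. cnt (Phi \<omega>) (rad v) < L \<and> L \<le> cnt (Phi \<omega>) (rad w)} =
    {\<omega>\<in>space M. cnt (Phi \<omega>) (rad v) < L} \<inter> {\<omega>\<in>space M. L \<le> cnt (Phi \<omega>) (rad w)}" by auto
  moreover have "{\<omega>\<in>space M. cnt (Phi \<omega>) (rad v) < L} \<in> events" by (rule cnt_sets)
  moreover have "{\<omega>\<in>space M. L \<le> cnt (Phi \<omega>) (rad w)} \<in> events" by (rule cnt_sets)
  ultimately show ?thesis using Es_sets by simp
qed

lemma Hs_incr: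
  assumes "0 \<le> v" "v \<le> w"
  shows "Hs s L w - Hs s L v = prob (Es s L \<inter> {\<omega>\<in>space M. cnt (Phi \<omega>) (rad v) < L \<and> L \<le> cnt (Phi \<omega>) (rad w)})"
proof -
  let ?A = "Es s L \<inter> {\<omega>\<in>space M. L \<le> cnt (Phi \<omega>) (rad w)}"
  let ?B = "Es s L \<inter> {\<omega>\<in>space M. L \<le> cnt (Phi \<omega>) (rad v)}"
  have sub: "?B \<subseteq> ?A"
    using cnt_mono[OF lf] rad_mono[OF assms(2)] by (auto intro: le_trans)
  have "?A - ?B = Es s L \<inter> {\<omega>\<in>space M. cnt (Phi \<omega>) (rad v) < L \<and> L \<le> cnt (Phi \<omega>) (rad w)}"
    by auto
  moreover have "prob (?A - ?B) = prob ?A - prob ?B"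
    using sub Es_sets cnt_sets[of "\<lambda>n. L \<le> n" "rad v"] cnt_sets[of "\<lambda>n. L \<le> n" "rad w"]
    by (intro finite_measure_Diff) auto
  ultimately show ?thesis unfolding Hs_def by simp
qed

lemma Hs_mono:
  assumes "0 \<le> v" "v \<le> w" shows "Hs s L v \<le> Hs s L w"
proof -
  have "0 \<le> prob (Es s L \<inter> {\<omega>\<in>space M. cnt (Phi \<omega>) (rad v) < L \<and> L \<le> cnt (Phi \<omega>) (rad w)})"
    by (rule measure_nonneg)
  then show ?thesis using Hs_incr[OF assms, of s L] by linarith
qed

lemma Hs_upper:
  assumes L: "1 \<le> L" and s: "0 < s" "s < 1" and v: "0 \<le> v" "v \<le> w"
  shows "Hs s L w - Hs s L v \<le> exp (-(s * v)) * (Qf L (v - s * v) - Qf L (w - s * v))"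
proof -
  have sv: "0 \<le> s * v" "s * v \<le> v" using s v by (auto simp: mult_left_le_one_le)
  have sub: "Es s L \<inter> {\<omega>\<in>space M. cnt (Phi \<omega>) (rad v) < L \<and> L \<le> cnt (Phi \<omega>) (rad w)}
        \<subseteq> Gs L (s * v) v - Gs L (s * v) w"
  proof
    fix \<omega> assume w: "\<omega> \<in> Es s L \<inter> {\<omega>\<in>space M. cnt (Phi \<omega>) (rad v) < L \<and> L \<le> cnt (Phi \<omega>) (rad w)}"
    then have sp: "\<omega> \<in> space M" and lt: "cnt (Phi \<omega>) (rad v) < L" and ge: "L \<le> cnt (Phi \<omega>) (rad w)"
      and e: "s * (Rk (Phi \<omega>) L)\<^sup>2 \<le> (Rk (Phi \<omega>) 1)\<^sup>2" by (auto simp: Es_def)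
    have rw: "rad w \<ge> 0" using v by (intro rad_nonneg) auto
    have neL: "\<exists>r\<ge>0. L \<le> cnt (Phi \<omega>) r" using ge rw by blast
    have ne1: "\<exists>r\<ge>0. 1 \<le> cnt (Phi \<omega>) r" using ge rw L by (meson le_trans)
    have RL: "Rk (Phi \<omega>) L > rad v" using Rk_le_iff[OF lf[OF sp] neL rad_nonneg[OF v(1)]] lt by auto
    have c0: "cnt (Phi \<omega>) (rad (s * v)) = 0"
    proof (rule ccontr)
      assume "cnt (Phi \<omega>) (rad (s * v)) \<noteq> 0"
      then have "Rk (Phi \<omega>) 1 \<le> rad (s * v)"
        using Rk_le_iff[OF lf[OF sp] ne1 rad_nonneg[OF sv(1)]] by auto
      moreover have "0 \<le> Rk (Phi \<omega>) 1" by (rule Rk_nonneg[OF lf[OF sp] ne1])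
      ultimately have "(Rk (Phi \<omega>) 1)\<^sup>2 \<le> (rad (s * v))\<^sup>2" by (intro power_mono) auto
      also have "\<dots> = s * (rad v)\<^sup>2" using rad_sq'[OF sv(1)] rad_sq'[OF v(1)] by simp
      also have "\<dots> < s * (Rk (Phi \<omega>) L)\<^sup>2"
        using RL rad_nonneg[OF v(1)] s by (intro mult_strict_left_mono power_strict_mono) auto
      finally show False using e by simp
    qed
    show "\<omega> \<in> Gs L (s * v) v - Gs L (s * v) w" using c0 lt ge sp by (auto simp: Gs_def)
  qed
  have sub2: "Gs L (s * v) w \<subseteq> Gs L (s * v) v"
    using cnt_mono[OF lf] rad_mono[OF v(2)] unfolding Gs_def by (auto intro: le_less_trans)
  have "Hs s L w - Hs s L v \<le> prob (Gs L (s * v) v - Gs L (s * v) w)"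
    unfolding Hs_incr[OF v] using sub Gs_sets D_sets by (intro finite_measure_mono) auto
  also have "\<dots> = prob (Gs L (s * v) v) - prob (Gs L (s * v) w)"
    using sub2 Gs_sets by (intro finite_measure_Diff) auto
  also have "\<dots> = exp (-(s * v)) * (Qf L (v - s * v) - Qf L (w - s * v))"
    unfolding Gs_def using probG[OF sv] probG[of "s * v" w] sv v by (simp add: right_diff_distrib)
  finally show ?thesis .
qed

lemma Hs_lower:
  assumes L: "1 \<le> L" and s: "0 < s" "s < 1" and v: "0 \<le> v" "v \<le> w" and sw: "s * w \<le> v"
  shows "exp (-(s * w)) * (Qf L (v - s * w) - Qf L (w - s * w)) \<le> Hs s L w - Hs s L v"
proof -
  have sw0: "0 \<le> s * w" using s v by auto
  have sub: "Gs L (s * w) v - Gs L (s * w) w \<subseteq>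
      Es s L \<inter> {\<omega>\<in>space M. cnt (Phi \<omega>) (rad v) < L \<and> L \<le> cnt (Phi \<omega>) (rad w)}"
  proof
    fix \<omega> assume w: "\<omega> \<in> Gs L (s * w) v - Gs L (s * w) w"
    then have sp: "\<omega> \<in> space M" and lt: "cnt (Phi \<omega>) (rad v) < L" and ge: "L \<le> cnt (Phi \<omega>) (rad w)"
      and c0: "cnt (Phi \<omega>) (rad (s * w)) = 0" by (auto simp: Gs_def)
    have rw: "rad w \<ge> 0" using v by (intro rad_nonneg) auto
    have neL: "\<exists>r\<ge>0. L \<le> cnt (Phi \<omega>) r" using ge rw by blast
    have ne1: "\<exists>r\<ge>0. 1 \<le> cnt (Phi \<omega>) r" using ge rw L by (meson le_trans)
    have RL: "Rk (Phi \<omega>) L \<le> rad w" using Rk_le_iff[OF lf[OF sp] neL rw] ge by auto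
    have R1: "Rk (Phi \<omega>) 1 > rad (s * w)" using Rk_le_iff[OF lf[OF sp] ne1 rad_nonneg[OF sw0]] c0 by auto
    have "s * (Rk (Phi \<omega>) L)\<^sup>2 \<le> s * (rad w)\<^sup>2"
      using RL Rk_nonneg[OF lf[OF sp] neL] s by (intro mult_left_mono power_mono) auto
    also have "\<dots> = (rad (s * w))\<^sup>2" using rad_sq'[OF sw0] rad_sq'[of w] v by simp
    also have "\<dots> \<le> (Rk (Phi \<omega>) 1)\<^sup>2" using R1 rad_nonneg[OF sw0] by (intro power_mono) auto
    finally show "\<omega> \<in> Es s L \<inter> {\<omega>\<in>space M. cnt (Phi \<omega>) (rad v) < L \<and> L \<le> cnt (Phi \<omega>) (rad w)}"
      using sp lt ge by (auto simp: Es_def)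
  qed
  have sub2: "Gs L (s * w) w \<subseteq> Gs L (s * w) v"
    using cnt_mono[OF lf] rad_mono[OF v(2)] unfolding Gs_def by (auto intro: le_less_trans)
  have "exp (-(s * w)) * (Qf L (v - s * w) - Qf L (w - s * w)) = prob (Gs L (s * w) v) - prob (Gs L (s * w) w)"
    unfolding Gs_def using probG[OF sw0 sw] probG[OF sw0, of w] sw v by (simp add: right_diff_distrib)
  also have "\<dots> = prob (Gs L (s * w) v - Gs L (s * w) w)"
    using sub2 Gs_sets by (intro finite_measure_Diff[symmetric]) auto
  also have "\<dots> \<le> Hs s L w - Hs s L v"
    unfolding Hs_incr[OF v] using sub Gs_sets D_sets by (intro finite_measure_mono) auto
  finally show ?thesis .
qed

lemma Hs_0:
  assumes "2 \<le> L" shows "Hs s L 0 = 0"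
proof -
  have e: "{\<omega>\<in>space M. L \<le> cnt (Phi \<omega>) (rad 0)} = {}"
  proof -
    { fix \<omega>
      have sub: "Phi \<omega> \<inter> cball 0 (rad 0) \<subseteq> {0}" by (auto simp: rad_def)
      have "cnt (Phi \<omega>) (rad 0) \<le> card {0::real^2}"
        unfolding cnt_def by (rule card_mono[OF _ sub]) simp
      then have "cnt (Phi \<omega>) (rad 0) \<le> 1" by simp
      then have "\<not> L \<le> cnt (Phi \<omega>) (rad 0)" using assms by linarith }
    then show ?thesis by auto
  qed
  show ?thesis unfolding Hs_def e by simp
qed

end

context pppm begin

lemma qf_shift:
  "exp (-(s * u)) * qf L (u - s * u) = (1 - s) ^ (L - 1) * qf L u"
proof -
  have "exp (-(s * u)) * exp (-(u - s * u)) = exp (-u)" by (simp add: exp_add[symmetric])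
  moreover have "(u - s * u) ^ (L - 1) = (1 - s) ^ (L - 1) * u ^ (L - 1)"
    by (simp add: power_mult_distrib[symmetric] algebra_simps)
  ultimately show ?thesis unfolding qf_def by (simp add: field_simps)
qed

lemma quot_lim:
  fixes a b :: "'b \<Rightarrow> real"
  assumes "1 \<le> L" "(a \<longlongrightarrow> z) F" "(b \<longlongrightarrow> z) F" "eventually (\<lambda>y. a y < b y) F"
  shows "((\<lambda>y. (Qf L (a y) - Qf L (b y)) / (b y - a y)) \<longlongrightarrow> qf L z) F"
  by (rule mvt_quot[OF Qf_deriv[OF assms(1)] qf_cont assms(2-4)])

lemma Hs_deriv:
  assumes L: "2 \<le> L" and s: "0 < s" "s < 1" and u: "0 \<le> u"
  shows "(Hs s L has_real_derivative exp (-(s * u)) * qf L (u - s * u)) (at u within {0..})"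
proof -
  define D where "D = exp (-(s * u)) * qf L (u - s * u)"
  define f where "f = (\<lambda>y. (Hs s L y - Hs s L u) / (y - u))"
  have L1: "1 \<le> L" using L by simp
  note QD = Qf_deriv[OF L1] and QC = qf_cont[of L]
  have right: "(f \<longlongrightarrow> D) (at u within {u..})"
  proof -
    have ev: "eventually (\<lambda>y. u < y) (at u within {u..})"
      unfolding eventually_at_filter by (auto intro!: always_eventually)
    define hi where "hi = (\<lambda>y. exp (-(s * u)) * ((Qf L (u - s * u) - Qf L (y - s * u)) / ((y - s * u) - (u - s * u))))"
    have hi_lim: "(hi \<longlongrightarrow> D) (at u within {u..})"
      unfolding hi_def D_def
      by (rule tendsto_mult[OF tendsto_const quot_lim[OF L1]])
         (auto intro!: tendsto_eq_intros eventually_mono[OF ev])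
    have hi_ge: "eventually (\<lambda>y. f y \<le> hi y) (at u within {u..})"
      using ev
    proof eventually_elim
      case (elim y)
      have "Hs s L y - Hs s L u \<le> exp (-(s * u)) * (Qf L (u - s * u) - Qf L (y - s * u))"
        using Hs_upper[OF L1 s u] elim by simp
      then have "(Hs s L y - Hs s L u) / (y - u) \<le> exp (-(s * u)) * (Qf L (u - s * u) - Qf L (y - s * u)) / (y - u)"
        using elim by (intro divide_right_mono) auto
      then show ?case unfolding f_def hi_def by simp
    qed
    show ?thesis
    proof (cases "u = 0")
      case True
      have D0: "D = 0" using True L unfolding D_def qf_def by simp
      have lo: "eventually (\<lambda>y. 0 \<le> f y) (at u within {u..})"
        using ev
      proof eventually_elim
        case (elim y)
        then show ?case using Hs_mono[OF u, of y s L] unfolding f_def by simp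
      qed
      show ?thesis using tendsto_sandwich[OF lo hi_ge _ hi_lim] D0 by simp
    next
      case False
      then have up: "u > 0" using u by simp
      have ev2: "eventually (\<lambda>y. s * y < u) (at u within {u..})"
      proof (rule order_tendstoD(2))
        show "((\<lambda>y. s * y) \<longlongrightarrow> s * u) (at u within {u..})" by (intro tendsto_intros)
        show "s * u < u" using up s by simp
      qed
      define lo where "lo = (\<lambda>y. exp (-(s * y)) * ((Qf L (u - s * y) - Qf L (y - s * y)) / ((y - s * y) - (u - s * y))))"
      have lo_lim: "(lo \<longlongrightarrow> D) (at u within {u..})"
        unfolding lo_def D_def
        by (rule tendsto_mult[OF _ quot_lim[OF L1]])
           (auto intro!: tendsto_eq_intros eventually_mono[OF ev])
      have lo_le: "eventually (\<lambda>y. lo y \<le> f y) (at u within {u..})"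
        using ev ev2
      proof eventually_elim
        case (elim y)
        have "exp (-(s * y)) * (Qf L (u - s * y) - Qf L (y - s * y)) \<le> Hs s L y - Hs s L u"
          using Hs_lower[OF L1 s u] elim by simp
        then have "exp (-(s * y)) * (Qf L (u - s * y) - Qf L (y - s * y)) / (y - u) \<le> (Hs s L y - Hs s L u) / (y - u)"
          using elim by (intro divide_right_mono) auto
        then show ?case unfolding f_def lo_def by simp
      qed
      show ?thesis using tendsto_sandwich[OF lo_le hi_ge lo_lim hi_lim] .
    qed
  qed
  have left: "(f \<longlongrightarrow> D) (at u within {0..u})"
  proof (cases "u = 0")
    case True
    have "trivial_limit (at u within {0..u})"
      unfolding trivial_limit_within using True islimpt_finite[of "{0::real}"] by simp
    then have "at u within {0..u} = bot" unfolding trivial_limit_def .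
    then show ?thesis by simp
  next
    case False
    then have up: "u > 0" using u by simp
    have ev: "eventually (\<lambda>y. 0 \<le> y \<and> y < u) (at u within {0..u})"
      unfolding eventually_at_filter by (auto intro!: always_eventually)
    have ev2: "eventually (\<lambda>y. s * u < y) (at u within {0..u})"
    proof (rule order_tendstoD(1))
      show "((\<lambda>y. y) \<longlongrightarrow> u) (at u within {0..u})" by (intro tendsto_intros)
      show "s * u < u" using up s by simp
    qed
    define hi where "hi = (\<lambda>y. exp (-(s * y)) * ((Qf L (y - s * y) - Qf L (u - s * y)) / ((u - s * y) - (y - s * y))))"
    define lo where "lo = (\<lambda>y. exp (-(s * u)) * ((Qf L (y - s * u) - Qf L (u - s * u)) / ((u - s * u) - (y - s * u))))"
    have hi_lim: "(hi \<longlongrightarrow> D) (at u within {0..u})"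
      unfolding hi_def D_def
      by (rule tendsto_mult[OF _ quot_lim[OF L1]])
         (auto intro!: tendsto_eq_intros eventually_mono[OF ev])
    have lo_lim: "(lo \<longlongrightarrow> D) (at u within {0..u})"
      unfolding lo_def D_def
      by (rule tendsto_mult[OF tendsto_const quot_lim[OF L1]])
         (auto intro!: tendsto_eq_intros eventually_mono[OF ev])
    have hi_ge: "eventually (\<lambda>y. f y \<le> hi y) (at u within {0..u})"
      using ev
    proof eventually_elim
      case (elim y)
      have "Hs s L u - Hs s L y \<le> exp (-(s * y)) * (Qf L (y - s * y) - Qf L (u - s * y))"
        using Hs_upper[OF L1 s, of y u] elim by simp
      then have "(Hs s L u - Hs s L y) / (u - y) \<le> exp (-(s * y)) * (Qf L (y - s * y) - Qf L (u - s * y)) / (u - y)"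
        using elim by (intro divide_right_mono) auto
      moreover have "f y = (Hs s L u - Hs s L y) / (u - y)" unfolding f_def
        using elim by (simp add: field_simps)
      ultimately show ?case unfolding hi_def by simp
    qed
    have lo_le: "eventually (\<lambda>y. lo y \<le> f y) (at u within {0..u})"
      using ev ev2
    proof eventually_elim
      case (elim y)
      have "exp (-(s * u)) * (Qf L (y - s * u) - Qf L (u - s * u)) \<le> Hs s L u - Hs s L y"
        using Hs_lower[OF L1 s, of y u] elim by simp
      then have "exp (-(s * u)) * (Qf L (y - s * u) - Qf L (u - s * u)) / (u - y) \<le> (Hs s L u - Hs s L y) / (u - y)"
        using elim by (intro divide_right_mono) auto
      moreover have "f y = (Hs s L u - Hs s L y) / (u - y)" unfolding f_def
        using elim by (simp add: field_simps)
      ultimately show ?case unfolding lo_def by simp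
    qed
    show ?thesis using tendsto_sandwich[OF lo_le hi_ge lo_lim hi_lim] .
  qed
  have U: "{0..} = {0..u} \<union> {u..}" using u by auto
  have "(f \<longlongrightarrow> D) (at u within {0..})" unfolding U by (rule Lim_Un[OF left right])
  then show ?thesis unfolding has_field_derivative_iff f_def D_def .
qed

end

context pppm begin

lemma Hs_eq:
  assumes L: "2 \<le> L" and s: "0 < s" "s < 1" and u: "0 \<le> u"
  shows "Hs s L u = (1 - s) ^ (L - 1) * (1 - Qf L u)"
proof -
  have L1: "1 \<le> L" using L by simp
  define K where "K = (\<lambda>u. (1 - s) ^ (L - 1) * (1 - Qf L u))"
  have "\<exists>c. \<forall>x\<in>{0::real..}. Hs s L x - K x = c"
  proof (rule has_field_derivative_zero_constant)
    show "convex {0::real..}" by (rule convex_real_interval)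
    fix x :: real assume x: "x \<in> {0..}"
    have dK: "(K has_real_derivative (1 - s) ^ (L - 1) * qf L x) (at x within {0..})"
    proof -
      have "((\<lambda>x. 1 - Qf L x) has_real_derivative (0 - - qf L x)) (at x)"
        by (rule DERIV_diff[OF DERIV_const Qf_deriv[OF L1]])
      then have "(K has_real_derivative (1 - s) ^ (L - 1) * (0 - - qf L x)) (at x)"
        unfolding K_def by (rule DERIV_cmult)
      then have "(K has_real_derivative (1 - s) ^ (L - 1) * qf L x) (at x)" by simp
      then show ?thesis by (rule has_field_derivative_at_within)
    qed
    show "((\<lambda>x. Hs s L x - K x) has_real_derivative 0) (at x within {0..})"
      using DERIV_diff[OF Hs_deriv[OF L s] dK] x qf_shift[of s x L] by simp
  qed
  then obtain c where c: "\<And>x. x \<ge> 0 \<Longrightarrow> Hs s L x - K x = c" by auto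
  have "c = 0" using c[of 0] Hs_0[OF L] Qf_0[OF L1] by (simp add: K_def)
  then show ?thesis using c[OF u] by (simp add: K_def)
qed

definition Bad :: "nat \<Rightarrow> 'a set" where
  "Bad L = {\<omega>\<in>space M. \<forall>n::nat. cnt (Phi \<omega>) (rad (real n)) < L}"

lemma Good_sets: "{\<omega>\<in>space M. L \<le> cnt (Phi \<omega>) (rad (real n))} \<in> events"
  by (rule cnt_sets)

lemma Bad_sets: "Bad L \<in> events"
proof -
  have "Bad L = space M - (\<Union>n. {\<omega>\<in>space M. L \<le> cnt (Phi \<omega>) (rad (real n))})"
    unfolding Bad_def by (auto simp: not_le) (use leD in blast)
  also have "\<dots> \<in> events"
  proof (intro sets.Diff sets.top sets.countable_UN image_subsetI)
    fix n show "{\<omega>\<in>space M. L \<le> cnt (Phi \<omega>) (rad (real n))} \<in> events" by (rule Good_sets)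
  qed
  finally show ?thesis .
qed

lemma prob_cnt_less:
  assumes "0 \<le> u" shows "prob {\<omega>\<in>space M. cnt (Phi \<omega>) (rad u) < L} = Qf L u"
proof -
  have "prob {\<omega>\<in>space M. cnt (Phi \<omega>) (rad u) < L} = Qf L (lam * measure lborel (cball (0::real^2) (rad u)))"
    unfolding cnt_def by (rule prob_less[OF cball_sets]) simp
  also have "lam * measure lborel (cball (0::real^2) (rad u)) = u"
    using area_cball[OF rad_nonneg[OF assms]] rad_sq[OF assms] by (simp add: mult_ac)
  finally show ?thesis .
qed

lemma prob_Bad: "prob (Bad L) = 0"
proof -
  have le: "prob (Bad L) \<le> Qf L (real n)" for n
  proof -
    have "prob (Bad L) \<le> prob {\<omega>\<in>space M. cnt (Phi \<omega>) (rad (real n)) < L}"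
      by (intro finite_measure_mono Bad_sets cnt_sets) (auto simp: Bad_def)
    then show ?thesis using prob_cnt_less[of "real n" L] by simp
  qed
  have "(\<lambda>n. Qf L (real n)) \<longlonglongrightarrow> 0"
    by (rule filterlim_compose[OF Qf_lim filterlim_real_sequentially])
  then have "prob (Bad L) \<le> 0" using le by (intro LIMSEQ_le_const) auto
  then show ?thesis using measure_nonneg[of M "Bad L"] by simp
qed

lemma prob_Es:
  assumes L: "2 \<le> L" and s: "0 < s" "s < 1"
  shows "prob (Es s L) = (1 - s) ^ (L - 1)"
proof -
  have L1: "1 \<le> L" using L by simp
  define A where "A = (\<lambda>n::nat. Es s L \<inter> {\<omega>\<in>space M. L \<le> cnt (Phi \<omega>) (rad (real n))})"
  have As: "range A \<subseteq> events"
  proof (intro image_subsetI)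
    fix n show "A n \<in> events" unfolding A_def by (rule sets.Int[OF Es_sets Good_sets])
  qed
  have inc: "incseq A" unfolding incseq_def
  proof (intro allI impI subsetI)
    fix m n :: nat and \<omega> assume mn: "m \<le> n" and w: "\<omega> \<in> A m"
    then have sp: "\<omega> \<in> space M" by (auto simp: A_def)
    have "cnt (Phi \<omega>) (rad (real m)) \<le> cnt (Phi \<omega>) (rad (real n))"
      using mn by (intro cnt_mono[OF lf[OF sp]] rad_mono) simp
    then show "\<omega> \<in> A n" using w by (auto simp: A_def)
  qed
  have lim1: "(\<lambda>n. prob (A n)) \<longlonglongrightarrow> prob (\<Union>n. A n)"
    by (rule finite_Lim_measure_incseq[OF As inc])
  have "(\<lambda>n. (1 - s) ^ (L - 1) * (1 - Qf L (real n))) \<longlonglongrightarrow> (1 - s) ^ (L - 1) * (1 - 0)"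
    by (intro tendsto_intros filterlim_compose[OF Qf_lim filterlim_real_sequentially])
  moreover have "prob (A n) = (1 - s) ^ (L - 1) * (1 - Qf L (real n))" for n
    using Hs_eq[OF L s, of "real n"] unfolding A_def Hs_def by simp
  ultimately have lim2: "(\<lambda>n. prob (A n)) \<longlonglongrightarrow> (1 - s) ^ (L - 1)" by simp
  have U: "prob (\<Union>n. A n) = (1 - s) ^ (L - 1)" using LIMSEQ_unique[OF lim1 lim2] .
  have sub: "(\<Union>n. A n) \<subseteq> Es s L" unfolding A_def by auto
  have diff: "Es s L - (\<Union>n. A n) \<subseteq> Bad L" unfolding A_def Bad_def Es_def by (auto simp: not_le)
  have "prob (Es s L - (\<Union>n. A n)) \<le> prob (Bad L)"
    using diff As Es_sets Bad_sets by (intro finite_measure_mono) auto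
  then have "prob (Es s L - (\<Union>n. A n)) = 0" using prob_Bad[of L] measure_nonneg[of M] by (simp add: antisym)
  moreover have "prob (Es s L - (\<Union>n. A n)) = prob (Es s L) - prob (\<Union>n. A n)"
    using sub As Es_sets by (intro finite_measure_Diff) auto
  ultimately show ?thesis using U by simp
qed

end

lemma quad:
  fixes b m s t :: real
  assumes b: "b > 0" and m: "m \<ge> 0" and s: "s = 1 / (sqrt (1 / b + m\<^sup>2) - m)" and t: "t > 0"
  shows "b * (1 + 2 * m * t) \<le> t\<^sup>2 \<longleftrightarrow> s \<le> t"
proof -
  define r where "r = sqrt (1 / b + m\<^sup>2)"
  have r2: "r\<^sup>2 = 1 / b + m\<^sup>2" unfolding r_def using b by simp
  have rm: "r > m"
  proof -
    have "m\<^sup>2 < 1 / b + m\<^sup>2" using b by simp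
    then have "sqrt (m\<^sup>2) < r" unfolding r_def by (rule real_sqrt_less_mono)
    then show ?thesis using m by simp
  qed
  have sp: "s > 0" using s rm unfolding r_def by simp
  have "s * (r - m) = 1" using s rm unfolding r_def by simp
  then have sq: "s\<^sup>2 - 2 * b * m * s - b = 0"
  proof -
    have "(s\<^sup>2 - 2 * b * m * s - b) * (r - m)\<^sup>2 = (s * (r - m))\<^sup>2 - 2 * b * m * (s * (r - m)) * (r - m) - b * (r - m)\<^sup>2"
      by (simp add: power2_eq_square algebra_simps)
    also have "\<dots> = 1 - 2 * b * m * (r - m) - b * (r\<^sup>2 - 2 * r * m + m\<^sup>2)"
      using \<open>s * (r - m) = 1\<close> by (simp add: power2_eq_square algebra_simps)
    also have "\<dots> = 0" unfolding r2 using b by (simp add: field_simps power2_eq_square)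
    finally have "(s\<^sup>2 - 2 * b * m * s - b) * (r - m)\<^sup>2 = 0" .
    then show ?thesis using rm by simp
  qed
  have fac: "t\<^sup>2 - b * (1 + 2 * m * t) = (t - s) * (t + b / s)"
  proof -
    have "(t - s) * (t + b / s) = t\<^sup>2 + (b / s - s) * t - b" using sp by (simp add: field_simps power2_eq_square)
    also have "b / s - s = - 2 * b * m" using sq sp by (simp add: field_simps power2_eq_square)
    finally show ?thesis by (simp add: algebra_simps)
  qed
  have "b / s > 0" using b sp by simp
  then have pos: "t + b / s > 0" using t by linarith
  have "b * (1 + 2 * m * t) \<le> t\<^sup>2 \<longleftrightarrow> 0 \<le> (t - s) * (t + b / s)" using fac by linarith
  also have "\<dots> \<longleftrightarrow> s \<le> t" using pos by (simp add: zero_le_mult_iff)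
  finally show ?thesis .
qed

lemma aux_div:
  fixes X Y k :: real
  assumes "Y > 0" "X > 0" "Y + k * X > 0"
  shows "(1 / Y\<^sup>2) / ((Y + k * X) / (X\<^sup>2 * Y)) = X\<^sup>2 / (Y * (Y + k * X))"
  using assms by (simp add: field_simps power2_eq_square)

lemma sir_expr:
  fixes x y :: real and L :: nat
  assumes x: "0 < x" and xy: "x < y" and L: "2 \<le> L"
  shows "y powr (- 4) / (x powr (- 4) + 2 * (real (L - 1) - 1) / (2 - 4) * (y powr (2 - 4) - x powr (2 - 4)) / (y\<^sup>2 - x\<^sup>2))
       = x ^ 4 / (y ^ 4 + (real L - 2) * x\<^sup>2 * y\<^sup>2)"
proof -
  have y: "0 < y" using x xy by simp
  have e1: "x powr (- 4) = 1 / x ^ 4" using x by (simp add: powr_minus powr_realpow divide_inverse)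
  have e2: "y powr (- 4) = 1 / y ^ 4" using y by (simp add: powr_minus powr_realpow divide_inverse)
  have e3: "x powr (2 - 4) = 1 / x\<^sup>2" using x by (simp add: powr_minus powr_realpow divide_inverse)
  have e4: "y powr (2 - 4) = 1 / y\<^sup>2" using y by (simp add: powr_minus powr_realpow divide_inverse)
  have rl: "real (L - 1) - 1 = real L - 2" using L by (simp add: of_nat_diff)
  have d: "y\<^sup>2 - x\<^sup>2 \<noteq> 0" using x xy y
  proof -
    have "x\<^sup>2 < y\<^sup>2" using x xy by (intro power_strict_mono) auto
    then show ?thesis by simp
  qed
  have q1: "1 / y\<^sup>2 - 1 / x\<^sup>2 = (x\<^sup>2 - y\<^sup>2) / (x\<^sup>2 * y\<^sup>2)"
    using x y by (simp add: field_simps)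
  have q2: "(x\<^sup>2 - y\<^sup>2) / (x\<^sup>2 * y\<^sup>2) / (y\<^sup>2 - x\<^sup>2) = - 1 / (x\<^sup>2 * y\<^sup>2)"
  proof -
    have "x\<^sup>2 - y\<^sup>2 = - (y\<^sup>2 - x\<^sup>2)" by simp
    then show ?thesis using d by (simp add: divide_simps)
  qed
  have "2 * (real L - 2) / (2 - 4) * (1 / y\<^sup>2 - 1 / x\<^sup>2) / (y\<^sup>2 - x\<^sup>2)
      = - (real L - 2) * ((1 / y\<^sup>2 - 1 / x\<^sup>2) / (y\<^sup>2 - x\<^sup>2))"
  proof -
    have "2 * (real L - 2) / (2 - 4) = - (real L - 2)" by (simp add: field_simps)
    then show ?thesis by (metis times_divide_eq_right)
  qed
  also have "\<dots> = - (real L - 2) * (- 1 / (x\<^sup>2 * y\<^sup>2))" unfolding q1 q2 by (rule refl)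
  also have "\<dots> = (real L - 2) / (x\<^sup>2 * y\<^sup>2)" by (simp add: diff_divide_distrib)
  finally have den: "x powr (- 4) + 2 * (real (L - 1) - 1) / (2 - 4) * (y powr (2 - 4) - x powr (2 - 4)) / (y\<^sup>2 - x\<^sup>2)
      = 1 / x ^ 4 + (real L - 2) / (x\<^sup>2 * y\<^sup>2)"
    unfolding e1 e3 e4 rl by simp
  have "y powr (- 4) / (x powr (- 4) + 2 * (real (L - 1) - 1) / (2 - 4) * (y powr (2 - 4) - x powr (2 - 4)) / (y\<^sup>2 - x\<^sup>2))
     = (1 / y ^ 4) / (1 / x ^ 4 + (real L - 2) / (x\<^sup>2 * y\<^sup>2))" by (simp only: e2 den)
  also have "\<dots> = x ^ 4 / (y ^ 4 + (real L - 2) * x\<^sup>2 * y\<^sup>2)"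
  proof -
    have k: "real L - 2 \<ge> 0" using L by simp
    have p1: "y ^ 4 + (real L - 2) * x\<^sup>2 * y\<^sup>2 > 0" using x y k
      by (intro add_pos_nonneg) auto
    have p2: "y\<^sup>2 + (real L - 2) * x\<^sup>2 > 0" using x y k by (intro add_pos_nonneg) auto
    have "1 / x ^ 4 + (real L - 2) / (x\<^sup>2 * y\<^sup>2) = (y\<^sup>2 + (real L - 2) * x\<^sup>2) / (x ^ 4 * y\<^sup>2)"
      using x y by (simp add: field_simps eval_nat_numeral)
    moreover have "(1 / y ^ 4) / ((y\<^sup>2 + (real L - 2) * x\<^sup>2) / (x ^ 4 * y\<^sup>2)) = x ^ 4 / (y\<^sup>2 * (y\<^sup>2 + (real L - 2) * x\<^sup>2))"
    proof -
      have "x ^ 4 = (x\<^sup>2)\<^sup>2" "y ^ 4 = (y\<^sup>2)\<^sup>2" by (simp_all add: power_mult[symmetric])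
      then show ?thesis using aux_div[of "y\<^sup>2" "x\<^sup>2" "real L - 2"] x y p2 by (simp add: mult_ac)
    qed
    moreover have "y\<^sup>2 * (y\<^sup>2 + (real L - 2) * x\<^sup>2) = y ^ 4 + (real L - 2) * x\<^sup>2 * y\<^sup>2"
      by (simp add: algebra_simps power2_eq_square eval_nat_numeral)
    ultimately show ?thesis by simp
  qed
  finally show ?thesis .
qed

lemma approx_SIR_cong:
  assumes "{i\<in>{1..L-1}. f i} = {i\<in>{1..L-1}. g i}"
  shows "approx_SIR al L P f = approx_SIR al L P g"
  unfolding approx_SIR_def by (simp only: assms)

context pppm begin

lemma good_facts:
  assumes sp: "\<omega> \<in> space M" and L: "2 \<le> L" and c0: "cnt (Phi \<omega>) 0 = 0" and nb: "\<omega> \<notin> Bad L"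
  shows "0 < Rk (Phi \<omega>) 1" "Rk (Phi \<omega>) 1 \<le> Rk (Phi \<omega>) L"
    "Min (Rk (Phi \<omega>) ` {1..L-1}) = Rk (Phi \<omega>) 1"
proof -
  obtain n :: nat where n: "L \<le> cnt (Phi \<omega>) (rad (real n))" using nb sp unfolding Bad_def by (auto simp: not_less)
  have neL: "\<exists>r\<ge>0. L \<le> cnt (Phi \<omega>) r" using n rad_nonneg[of "real n"] by auto
  have ne: "\<exists>r\<ge>0. k \<le> cnt (Phi \<omega>) r" if "k \<le> L" for k using neL that by (meson le_trans)
  have ne1: "\<exists>r\<ge>0. 1 \<le> cnt (Phi \<omega>) r" using ne L by simp
  have "\<not> Rk (Phi \<omega>) 1 \<le> 0" using Rk_le_iff[OF lf[OF sp] ne1, of 0] c0 by simp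
  then show "0 < Rk (Phi \<omega>) 1" by simp
  show "Rk (Phi \<omega>) 1 \<le> Rk (Phi \<omega>) L" using Rk_mono[OF lf[OF sp] neL] L by simp
  show "Min (Rk (Phi \<omega>) ` {1..L-1}) = Rk (Phi \<omega>) 1"
  proof (rule Min_eqI)
    show "finite (Rk (Phi \<omega>) ` {1..L-1})" by simp
    show "Rk (Phi \<omega>) 1 \<in> Rk (Phi \<omega>) ` {1..L-1}" using L by auto
    fix y assume "y \<in> Rk (Phi \<omega>) ` {1..L-1}"
    then obtain i where i: "i \<in> {1..L-1}" "y = Rk (Phi \<omega>) i" by auto
    then show "Rk (Phi \<omega>) 1 \<le> y" using Rk_mono[OF lf[OF sp] ne[of i]] by auto
  qed
qed

lemma cnt0_prob: "prob {\<omega>\<in>space M. cnt (Phi \<omega>) 0 = 0} = 1"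
proof -
  have "prob {\<omega>\<in>space M. card (Phi \<omega> \<inter> cball 0 0) = 0}
      = exp (- lam * measure lborel (cball (0::real^2) 0)) * (lam * measure lborel (cball (0::real^2) 0)) ^ 0 / fact 0"
    by (rule card_prob[OF cball_sets]) simp
  also have "\<dots> = 1" using area_cball[of 0] by simp
  finally show ?thesis unfolding cnt_def .
qed

end

theorem corollary7:
  fixes M :: "'a measure" and Phi :: "'a \<Rightarrow> (real^2) set" and a :: "nat \<Rightarrow> 'a \<Rightarrow> bool"
    and lam gamma beta p :: real and L :: nat
  assumes ppp: "hppp M lam Phi" and lam: "lam > 0"
    and L: "L \<ge> 2" and gamma: "gamma > 0" and beta: "beta > 0"
    and p: "p = 1"
    and a_meas: "\<forall>i\<in>{1..L-1}. {\<omega>\<in>space M. a i \<omega>} \<in> sets M"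
    and a_bern: "\<forall>i\<in>{1..L-1}. measure M {\<omega>\<in>space M. a i \<omega>} = p"
    and a_indep: "prob_space.indep_vars M (\<lambda>_. count_space UNIV) a {1..L-1}"
  shows "measure M {\<omega>\<in>space M. approx_SIR 4 L (Phi \<omega>) (\<lambda>i. a i \<omega>) \<ge> ereal (beta / gamma)}
    = (if beta < gamma / real (L - 1)
       then (1 - 1 / (sqrt (gamma / beta + (real L - 2)\<^sup>2 / 4) - (real L - 2) / 2)) ^ (L - 1)
       else 0)"
proof -
  have ps: "prob_space M" using ppp unfolding hppp_def by blast
  interpret P: pppm M lam Phi using ps ppp lam by (simp add: pppm_def pppm_axioms_def)
  define b where "b = beta / gamma"
  define m where "m = (real L - 2) / 2"
  define s where "s = 1 / (sqrt (gamma / beta + (real L - 2)\<^sup>2 / 4) - (real L - 2) / 2)"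
  have b0: "b > 0" using beta gamma by (simp add: b_def)
  have m0: "m \<ge> 0" using L by (simp add: m_def)
  have s_eq: "s = 1 / (sqrt (1 / b + m\<^sup>2) - m)"
    unfolding s_def b_def m_def by (simp add: power_divide)
  have L1: "1 \<le> L" using L by simp
  define T where "T = {\<omega>\<in>space M. approx_SIR 4 L (Phi \<omega>) (\<lambda>i. a i \<omega>) \<ge> ereal (beta / gamma)}"
  have T_sets: "T \<in> sets M"
  proof -
    have "T = (\<Union>A\<in>Pow {1..L-1}. {\<omega>\<in>space M. \<forall>i\<in>{1..L-1}. a i \<omega> = (i \<in> A)} \<inter>
          {\<omega>\<in>space M. ereal (beta / gamma) \<le> approx_SIR 4 L (Phi \<omega>) (\<lambda>i. i \<in> A)})"
    proof (intro equalityI subsetI)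
      fix \<omega> assume w: "\<omega> \<in> T"
      let ?A = "{i\<in>{1..L-1}. a i \<omega>}"
      have "approx_SIR 4 L (Phi \<omega>) (\<lambda>i. a i \<omega>) = approx_SIR 4 L (Phi \<omega>) (\<lambda>i. i \<in> ?A)"
        by (rule approx_SIR_cong) auto
      then show "\<omega> \<in> (\<Union>A\<in>Pow {1..L-1}. {\<omega>\<in>space M. \<forall>i\<in>{1..L-1}. a i \<omega> = (i \<in> A)} \<inter>
          {\<omega>\<in>space M. ereal (beta / gamma) \<le> approx_SIR 4 L (Phi \<omega>) (\<lambda>i. i \<in> A)})"
        using w unfolding T_def by (intro UN_I[of ?A]) auto
    next
      fix \<omega> assume "\<omega> \<in> (\<Union>A\<in>Pow {1..L-1}. {\<omega>\<in>space M. \<forall>i\<in>{1..L-1}. a i \<omega> = (i \<in> A)} \<inter>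
          {\<omega>\<in>space M. ereal (beta / gamma) \<le> approx_SIR 4 L (Phi \<omega>) (\<lambda>i. i \<in> A)})"
      then obtain A where A: "A \<subseteq> {1..L-1}" "\<omega> \<in> space M" "\<forall>i\<in>{1..L-1}. a i \<omega> = (i \<in> A)"
        "ereal (beta / gamma) \<le> approx_SIR 4 L (Phi \<omega>) (\<lambda>i. i \<in> A)" by auto
      have "approx_SIR 4 L (Phi \<omega>) (\<lambda>i. a i \<omega>) = approx_SIR 4 L (Phi \<omega>) (\<lambda>i. i \<in> A)"
        by (rule approx_SIR_cong) (use A in auto)
      then show "\<omega> \<in> T" using A unfolding T_def by auto
    qed
    also have "\<dots> \<in> sets M"
    proof (intro sets.finite_UN sets.Int finite_Pow_iff[THEN iffD2] finite_atLeastAtMost ballI)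
      fix A assume "A \<in> Pow {1..L-1}"
      show "{\<omega>\<in>space M. ereal (beta / gamma) \<le> approx_SIR 4 L (Phi \<omega>) (\<lambda>i. i \<in> A)} \<in> sets M"
        by (rule P.SIR_sets)
      show "{\<omega>\<in>space M. \<forall>i\<in>{1..L-1}. a i \<omega> = (i \<in> A)} \<in> sets M"
      proof (rule sets.sets_Collect_finite_All)
        fix i assume i: "i \<in> {1..L-1}"
        show "{\<omega>\<in>space M. a i \<omega> = (i \<in> A)} \<in> sets M"
        proof (cases "i \<in> A")
          case True then show ?thesis using a_meas i by simp
        next
          case False
          have "{\<omega>\<in>space M. a i \<omega> = (i \<in> A)} = space M - {\<omega>\<in>space M. a i \<omega>}" using False by auto
          then show ?thesis using a_meas i by auto
        qed
      qed simp
    qed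
    finally show ?thesis .
  qed
  have AEa: "AE \<omega> in M. \<forall>i\<in>{1..L-1}. a i \<omega>"
  proof (rule AE_finite_allI)
    fix i assume i: "i \<in> {1..L-1}"
    have "AE \<omega> in M. \<omega> \<in> {\<omega>\<in>space M. a i \<omega>}"
      by (rule P.AE_prob_1) (use a_bern p i in simp)
    then show "AE \<omega> in M. a i \<omega>" by eventually_elim simp
  qed simp
  have AEc: "AE \<omega> in M. cnt (Phi \<omega>) 0 = 0"
  proof -
    have "AE \<omega> in M. \<omega> \<in> {\<omega>\<in>space M. cnt (Phi \<omega>) 0 = 0}" by (rule P.AE_prob_1[OF P.cnt0_prob])
    then show ?thesis by eventually_elim simp
  qed
  have AEb: "AE \<omega> in M. \<omega> \<notin> P.Bad L"
  proof -
    have "prob_space.prob M (space M - P.Bad L) = 1"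
      using P.prob_compl[OF P.Bad_sets] P.prob_Bad by simp
    then have "AE \<omega> in M. \<omega> \<in> space M - P.Bad L" by (rule P.AE_prob_1)
    then show ?thesis by eventually_elim simp
  qed
  have AEg: "AE \<omega> in M. (\<forall>i\<in>{1..L-1}. a i \<omega>) \<and> cnt (Phi \<omega>) 0 = 0 \<and> \<omega> \<notin> P.Bad L"
    using AEa AEc AEb by eventually_elim auto
  define ex where "ex = (\<lambda>x y :: real. y powr (- 4) / (x powr (- 4) + 2 * (real (L - 1) - 1) / (2 - 4)
      * (y powr (2 - 4) - x powr (2 - 4)) / (y\<^sup>2 - x\<^sup>2)))"
  have val: "approx_SIR 4 L (Phi \<omega>) (\<lambda>i. a i \<omega>) = ereal (ex (Rk (Phi \<omega>) 1) (Rk (Phi \<omega>) L))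
      \<and> 0 < Rk (Phi \<omega>) 1 \<and> Rk (Phi \<omega>) 1 \<le> Rk (Phi \<omega>) L"
    if "\<omega> \<in> space M" "\<forall>i\<in>{1..L-1}. a i \<omega>" "cnt (Phi \<omega>) 0 = 0" "\<omega> \<notin> P.Bad L" for \<omega>
  proof -
    note g = P.good_facts[OF that(1) L that(3) that(4)]
    have S: "{i\<in>{1..L-1}. a i \<omega>} = {1..L-1}" using that(2) by auto
    have c: "card {1..L-1} \<noteq> 0" using L by simp
    have cc: "card {1..L-1} = L - 1" by simp
    have "approx_SIR 4 L (Phi \<omega>) (\<lambda>i. a i \<omega>) = ereal (ex (Min (Rk (Phi \<omega>) ` {1..L-1})) (Rk (Phi \<omega>) L))"
      unfolding approx_SIR_def S Let_def cc ex_def using c cc by (simp only: if_False refl cc)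
    then show ?thesis using g by simp
  qed
  have ex_eq: "ex x x = 1" if "0 < x" for x
    using that unfolding ex_def by simp
  show ?thesis
  proof (cases "beta < gamma / real (L - 1)")
    case True
    have bL: "b * (1 + 2 * m * 1) < 1\<^sup>2"
    proof -
      have "1 + 2 * m = real (L - 1)" using L by (simp add: m_def of_nat_diff field_simps)
      moreover have "beta * real (L - 1) < gamma" using True L by (simp add: field_simps)
      ultimately show ?thesis using gamma by (simp add: b_def field_simps)
    qed
    have sp: "0 < s"
    proof -
      have "b * (1 + 2 * m * s) \<le> s\<^sup>2" if "s > 0" using quad[OF b0 m0 s_eq that] by simp
      have "sqrt (1 / b + m\<^sup>2) > sqrt (m\<^sup>2)" using b0 by (intro real_sqrt_less_mono) simp
      then show ?thesis using m0 s_eq by simp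
    qed
    have s1: "s < 1"
    proof -
      define c where "c = b * (1 + 2 * m)"
      have c: "c < 1" "0 \<le> c" using bL b0 m0 by (auto simp: c_def)
      define t where "t = (1 + c) / 2"
      have t: "0 < t" "t < 1" using c by (auto simp: t_def)
      have "b * (1 + 2 * m * t) \<le> c" unfolding c_def using b0 m0 t
        by (intro mult_left_mono) (auto simp: mult_left_le)
      also have "c \<le> t\<^sup>2"
      proof -
        have "t\<^sup>2 - c = (1 - c)\<^sup>2 / 4" unfolding t_def by (simp add: power2_eq_square field_simps)
        then show ?thesis by (smt (verit) zero_le_power2 divide_nonneg_pos)
      qed
      finally have "s \<le> t" using quad[OF b0 m0 s_eq t(1)] by simp
      then show ?thesis using t by simp
    qed
    have b1: "b \<le> 1" using bL m0 b0 by (smt (verit) mult_le_cancel_left1 power_one)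
    have "AE \<omega> in M. (\<omega> \<in> T) = (\<omega> \<in> P.Es s L)"
      using AEg
    proof (rule AE_mp, intro AE_I2 impI)
      fix \<omega> assume sp\<omega>: "\<omega> \<in> space M" and g: "(\<forall>i\<in>{1..L-1}. a i \<omega>) \<and> cnt (Phi \<omega>) 0 = 0 \<and> \<omega> \<notin> P.Bad L"
      define x where "x = Rk (Phi \<omega>) 1"
      define y where "y = Rk (Phi \<omega>) L"
      have v: "approx_SIR 4 L (Phi \<omega>) (\<lambda>i. a i \<omega>) = ereal (ex x y)" "0 < x" "x \<le> y"
        using val[OF sp\<omega>] g unfolding x_def y_def by auto
      have "\<omega> \<in> T \<longleftrightarrow> b \<le> ex x y" unfolding T_def b_def using sp\<omega> v by simp
      also have "\<dots> \<longleftrightarrow> s * y\<^sup>2 \<le> x\<^sup>2"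
      proof (cases "x = y")
        case True
        have "s * y\<^sup>2 \<le> x\<^sup>2" using True s1 v(2) by (simp add: mult_le_cancel_right1)
        then show ?thesis using True ex_eq[OF v(2)] b1 by simp
      next
        case False
        then have xy: "x < y" using v by simp
        have y0: "0 < y" using v xy by simp
        define t where "t = x\<^sup>2 / y\<^sup>2"
        have t0: "t > 0" using v y0 by (simp add: t_def)
        have "b \<le> ex x y \<longleftrightarrow> b \<le> x ^ 4 / (y ^ 4 + (real L - 2) * x\<^sup>2 * y\<^sup>2)"
          unfolding ex_def using sir_expr[OF v(2) xy L] by simp
        also have "\<dots> \<longleftrightarrow> b * (1 + 2 * m * t) \<le> t\<^sup>2"
        proof -
          have pos: "y ^ 4 + (real L - 2) * x\<^sup>2 * y\<^sup>2 > 0" using y0 v L by (intro add_pos_nonneg) auto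
          have e1: "b * (y ^ 4 + (real L - 2) * x\<^sup>2 * y\<^sup>2) = (b * (1 + 2 * m * t)) * y ^ 4"
            using y0 unfolding t_def m_def by (simp add: field_simps eval_nat_numeral)
          have e2: "x ^ 4 = t\<^sup>2 * y ^ 4" using y0 unfolding t_def by (simp add: field_simps eval_nat_numeral)
          have y4: "y ^ 4 > 0" using y0 by simp
          have "b \<le> x ^ 4 / (y ^ 4 + (real L - 2) * x\<^sup>2 * y\<^sup>2) \<longleftrightarrow> b * (y ^ 4 + (real L - 2) * x\<^sup>2 * y\<^sup>2) \<le> x ^ 4"
            using pos by (simp add: le_divide_eq)
          also have "\<dots> \<longleftrightarrow> (b * (1 + 2 * m * t)) * y ^ 4 \<le> t\<^sup>2 * y ^ 4" by (simp only: e1 e2)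
          also have "\<dots> \<longleftrightarrow> b * (1 + 2 * m * t) \<le> t\<^sup>2" using y4 by (rule mult_le_cancel_right_pos)
          finally show ?thesis .
        qed
        also have "\<dots> \<longleftrightarrow> s \<le> t" by (rule quad[OF b0 m0 s_eq t0])
        also have "\<dots> \<longleftrightarrow> s * y\<^sup>2 \<le> x\<^sup>2" using y0 unfolding t_def by (simp add: le_divide_eq)
        finally show ?thesis .
      qed
      also have "\<dots> \<longleftrightarrow> \<omega> \<in> P.Es s L" using sp\<omega> unfolding P.Es_def x_def y_def by simp
      finally show "(\<omega> \<in> T) = (\<omega> \<in> P.Es s L)" .
    qed
    then have "measure M T = prob_space.prob M (P.Es s L)"
      by (rule measure_eq_AE[OF _ T_sets P.Es_sets])
    also have "\<dots> = (1 - s) ^ (L - 1)" by (rule P.prob_Es[OF L sp s1])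
    finally show ?thesis using True unfolding T_def s_def by simp
  next
    case False
    have bL: "b * real (L - 1) \<ge> 1"
    proof -
      have "beta * real (L - 1) \<ge> gamma" using False L by (simp add: field_simps not_less)
      then have "1 \<le> beta * real (L - 1) / gamma" using gamma by (subst le_divide_eq_1_pos) (auto simp del: of_nat_diff)
      then show ?thesis unfolding b_def by (simp only: times_divide_eq_left)
    qed
    have AEeq: "AE \<omega> in M. \<omega> \<in> T \<longrightarrow> Rk (Phi \<omega>) 1 = Rk (Phi \<omega>) L"
      using AEg
    proof (rule AE_mp, intro AE_I2 impI)
      fix \<omega> assume sp\<omega>: "\<omega> \<in> space M" and g: "(\<forall>i\<in>{1..L-1}. a i \<omega>) \<and> cnt (Phi \<omega>) 0 = 0 \<and> \<omega> \<notin> P.Bad L"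
        and wT: "\<omega> \<in> T"
      define x where "x = Rk (Phi \<omega>) 1"
      define y where "y = Rk (Phi \<omega>) L"
      have v: "approx_SIR 4 L (Phi \<omega>) (\<lambda>i. a i \<omega>) = ereal (ex x y)" "0 < x" "x \<le> y"
        using val[OF sp\<omega>] g unfolding x_def y_def by auto
      have bex: "b \<le> ex x y" using wT unfolding T_def b_def using v by simp
      show "x = y"
      proof (rule ccontr)
        assume "x \<noteq> y"
        then have xy: "x < y" using v by simp
        have y0: "0 < y" using v xy by simp
        define t where "t = x\<^sup>2 / y\<^sup>2"
        have t0: "t > 0" using v y0 by (simp add: t_def)
        have t1: "t < 1" using xy v y0 unfolding t_def by (simp add: power_strict_mono)
        have pos: "y ^ 4 + (real L - 2) * x\<^sup>2 * y\<^sup>2 > 0" using y0 v L by (intro add_pos_nonneg) auto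
        have exv: "ex x y = x ^ 4 / (y ^ 4 + (real L - 2) * x\<^sup>2 * y\<^sup>2)"
          unfolding ex_def by (rule sir_expr[OF v(2) xy L])
        have "b \<le> x ^ 4 / (y ^ 4 + (real L - 2) * x\<^sup>2 * y\<^sup>2)" using bex unfolding exv .
        then have "b * (y ^ 4 + (real L - 2) * x\<^sup>2 * y\<^sup>2) \<le> x ^ 4"
          using pos by (simp add: le_divide_eq)
        also have "b * (y ^ 4 + (real L - 2) * x\<^sup>2 * y\<^sup>2) = (b * (1 + (real L - 2) * t)) * y ^ 4"
          using y0 unfolding t_def by (simp add: field_simps eval_nat_numeral)
        also have "x ^ 4 = t\<^sup>2 * y ^ 4" using y0 unfolding t_def by (simp add: field_simps eval_nat_numeral)
        finally have le: "b * (1 + (real L - 2) * t) \<le> t\<^sup>2" using y0 by simp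
        have "t \<le> b * (1 + (real L - 2) * t)"
        proof -
          have "1 + (real L - 2) * t - real (L - 1) * t = 1 - t" using L by (simp add: of_nat_diff algebra_simps)
          then have "real (L - 1) * t \<le> 1 + (real L - 2) * t" using t1 by simp
          moreover have "t \<le> b * real (L - 1) * t" using mult_right_mono[OF bL less_imp_le[OF t0]] by (simp only: mult_1)
          ultimately show ?thesis using b0 t0 L
            by (smt (verit, best) mult.assoc mult_left_mono)
        qed
        moreover have "t\<^sup>2 < t" using t0 t1 by (simp add: power2_eq_square)
        ultimately show False using le by simp
      qed
    qed
    have le: "measure M T \<le> (1 - s') ^ (L - 1)" if s': "0 < s'" "s' < 1" for s'
    proof -
      have "AE \<omega> in M. \<omega> \<in> T \<longrightarrow> \<omega> \<in> P.Es s' L"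
        using AEeq
      proof (rule AE_mp, intro AE_I2 impI)
        fix \<omega> assume "\<omega> \<in> space M" "\<omega> \<in> T \<longrightarrow> Rk (Phi \<omega>) 1 = Rk (Phi \<omega>) L" "\<omega> \<in> T"
        then show "\<omega> \<in> P.Es s' L" using s' unfolding P.Es_def by (simp add: mult_left_le_one_le)
      qed
      then have "measure M T \<le> prob_space.prob M (P.Es s' L)"
        by (rule P.finite_measure_mono_AE[OF _ P.Es_sets])
      also have "\<dots> = (1 - s') ^ (L - 1)" by (rule P.prob_Es[OF L s'])
      finally show ?thesis .
    qed
    have "measure M T \<le> 0"
    proof (rule field_le_epsilon)
      fix e :: real assume e: "0 < e"
      define d where "d = min e (1/2)"
      have d: "0 < d" "d \<le> 1/2" "d \<le> e" using e by (auto simp: d_def)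
      have "measure M T \<le> (1 - (1 - d)) ^ (L - 1)" using le[of "1 - d"] d by simp
      also have "\<dots> = d ^ (L - 1)" by simp
      also have "\<dots> \<le> d ^ 1" using d L by (intro power_decreasing) auto
      finally show "measure M T \<le> 0 + e" using d by simp
    qed
    then have "measure M T = 0" using measure_nonneg[of M T] by simp
    then show ?thesis using False unfolding T_def by simp
  qed
qed

end
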